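(* Let $\Sigma\in\mathsf{c}\text{-}\mathsf{Fan}_{\rm sc}^{+-}(2)$ with rays $v_1=(1,0),v_2,\ldots,v_{n-2}=(0,-1),v_{n-1}=(-1,0),v_n=v_0=(0,1)$ in clockwise order, facets $\sigma_i=\operatorname{cone}\{v_i,v_{i+1}\}$ ($1\le i\le n$), and quiddity sequence $\mathrm{s}(\Sigma)=(a_1,\ldots,a_{n-2};0,0)$. (a) We have $\mathrm{s}(\rho(\Sigma))=(a_2,\ldots,a_{n-2},a_1;0,0)$. In particular, $\rho^{n-2}(\Sigma)=\Sigma$ holds, and therefore $\rho$ is an invertible operation. (b) For each $1\le i\le n-3$, we have $D_{\sigma_i}(\Sigma)=\rho^{n-3-i}\circ D_{\sigma_{n-3}}\circ\rho^{i+1}(\Sigma)$.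
   Context: $\mathsf{c}\text{-}\mathsf{Fan}_{\rm sc}^{+-}(2)$ is the set of complete nonsingular sign-coherent fans in $\mathbb{R}^2$ with positive cone $\sigma_+=\operatorname{cone}\{(1,0),(0,1)\}$ and negative cone $\operatorname{cone}\{(-1,0),(0,-1)\}$ which contain $\sigma_{-+}=\operatorname{cone}\{(-1,0),(0,1)\}$. The quiddity sequence is defined by $a_iv_i=v_{i-1}+v_{i+1}$ (here $a_{n-1}=a_n=0$). For a cone $\sigma=\operatorname{cone}\{u,v\}$ of a nonsingular fan, the subdivision $D_\sigma$ adds the ray $u+v$ and replaces $\sigma$ by $\operatorname{cone}\{u,u+v\}$ and $\operatorname{cone}\{v,u+v\}$. The rotation $\rho(\Sigma)$: take $\sigma=\operatorname{cone}\{(1,0),(\ell,-1)\}\in\Sigma$ (i.e. $v_2=(\ell,-1)$); let $\Sigma'$ have rays $(\Sigma_1\setminus\{(0,1)\})\cup\{(-\ell,1)\}$ and 2-dimensional cones $(\Sigma_2\setminus\{\sigma_+,\sigma_{-+}\})\cup\{-\sigma,\operatorname{cone}\{(-\ell,1),(1,0)\}\}$; then $\rho(\Sigma)$ is the image of $\Sigma'$ under the linear map of $\mathbb{R}^2$ sending $(1,0)\mapsto(0,1)$ and $(\ell,-1)\mapsto(1,0)$. *)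

theory Defs
  imports Main
begin

text \<open>Rays of a nonsingular fan are primitive
integer vectors, and a 2-dimensional nonsingular cone cone{u,v} is determined by
the set {u,v} of its primitive generators. A fan in R^2 is encoded as the pair
(set of rays, set of 2-dimensional cones), each 2-dimensional cone being
encoded by its generator set.\<close>

type_synonym vec = "int \<times> int"
type_synonym fan = "vec set \<times> vec set set"

definition vadd :: "vec \<Rightarrow> vec \<Rightarrow> vec" where
  "vadd u v = (fst u + fst v, snd u + snd v)"

definition vneg :: "vec \<Rightarrow> vec" where
  "vneg u = (- fst u, - snd u)"

definition smul :: "int \<Rightarrow> vec \<Rightarrow> vec" where
  "smul a u = (a * fst u, a * snd u)"

definition det2 :: "vec \<Rightarrow> vec \<Rightarrow> int" where
  "det2 u v = fst u * snd v - snd u * fst v"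

definition fan_of :: "vec list \<Rightarrow> fan" where
  "fan_of vs = (set vs, {{vs ! i, vs ! ((i + 1) mod length vs)} | i. i < length vs})"

text \<open>Ray sequences v_1 = (1,0), v_2, ..., v_(n-2) = (0,-1), v_(n-1) = (-1,0),
v_n = (0,1) (stored 0-indexed) in clockwise order, each consecutive pair
(cyclically) forming a unimodular clockwise basis (nonsingularity), and the
intermediate rays lying in the open fourth quadrant (sign-coherence of the
cones subdividing the fourth quadrant).\<close>
definition is_ray_seq :: "vec list \<Rightarrow> bool" where
  "is_ray_seq vs \<longleftrightarrow> (let n = length vs in
     n \<ge> 4 \<and> vs ! 0 = (1, 0) \<and> vs ! (n - 3) = (0, -1) \<and>
     vs ! (n - 2) = (-1, 0) \<and> vs ! (n - 1) = (0, 1) \<and>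
     (\<forall>i < n. det2 (vs ! i) (vs ! ((i + 1) mod n)) = -1) \<and>
     (\<forall>i. 0 < i \<and> i < n - 3 \<longrightarrow> fst (vs ! i) > 0 \<and> snd (vs ! i) < 0))"

definition cFan :: "fan set" where
  "cFan = {fan_of vs | vs. is_ray_seq vs}"

definition rays_list :: "fan \<Rightarrow> vec list" where
  "rays_list S = (THE vs. is_ray_seq vs \<and> fan_of vs = S)"

definition nrays :: "fan \<Rightarrow> nat" where
  "nrays S = length (rays_list S)"

text \<open>v_i for i = 0..n+1 (1-indexed, cyclic: v_0 = v_n, v_(n+1) = v_1).\<close>
definition ray :: "fan \<Rightarrow> nat \<Rightarrow> vec" where
  "ray S i = rays_list S ! ((i + nrays S - 1) mod nrays S)"

definition quiddity :: "fan \<Rightarrow> int list" where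
  "quiddity S = map (\<lambda>i. THE a. smul a (ray S i) = vadd (ray S (i - 1)) (ray S (i + 1)))
                    [1..<nrays S + 1]"

definition facet :: "fan \<Rightarrow> nat \<Rightarrow> vec \<times> vec" where
  "facet S i = (ray S i, ray S (i + 1))"

definition subdiv :: "vec \<times> vec \<Rightarrow> fan \<Rightarrow> fan" where
  "subdiv \<sigma> S = (let u = fst \<sigma>; v = snd \<sigma>; w = vadd u v in
     (insert w (fst S), (snd S - {{u, v}}) \<union> {{u, w}, {v, w}}))"

definition rho :: "fan \<Rightarrow> fan" where
  "rho S = (let l = (THE l. {(1, 0), (l, -1)} \<in> snd S);
               M = (\<lambda>(x, y). (- y, x + l * y) :: vec);
               R' = (fst S - {(0, 1)}) \<union> {(- l, 1)};
               C' = (snd S - {{(1, 0), (0, 1)}, {(-1, 0), (0, 1)}})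
                    \<union> {vneg ` {(1, 0), (l, -1)}, {(- l, 1), (1, 0)}}
            in (M ` R', (\<lambda>c. M ` c) ` C'))"

end

theory Submission
  imports Defs Complex_Main
begin

definition qt :: "vec \<Rightarrow> vec \<Rightarrow> vec \<Rightarrow> int" where
  "qt p v u = (THE a. smul a v = vadd p u)"

lemma qt_eq: assumes "v \<noteq> (0,0)" "smul a v = vadd p u" shows "qt p v u = a"
  unfolding qt_def
proof (rule the_equality)
  show "smul a v = vadd p u" by fact
  fix b assume "smul b v = vadd p u"
  with assms have "smul b v = smul a v" by simp
  with assms(1) show "b = a"
    by (cases v) (auto simp: smul_def)
qed

lemma det_ex: assumes "det2 p v = -1" "det2 v u = -1"
  shows "smul (- det2 p u) v = vadd p u"
proof -
  obtain a b where p: "p = (a,b)" by fastforce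
  obtain c d where v: "v = (c,d)" by fastforce
  obtain e f where u: "u = (e,f)" by fastforce
  have h1: "a*d - b*c + 1 = 0" and h2: "c*f - d*e + 1 = 0"
    using assms by (auto simp: p v u det2_def)
  have "(b*e - a*f)*c - (a+e) = -e*(a*d - b*c + 1) - a*(c*f - d*e + 1)"
    by (simp add: algebra_simps)
  hence 1: "(b*e - a*f)*c = a+e" using h1 h2 by simp
  have "(b*e - a*f)*d - (b+f) = -f*(a*d - b*c + 1) - b*(c*f - d*e + 1)"
    by (simp add: algebra_simps)
  hence 2: "(b*e - a*f)*d = b+f" using h1 h2 by simp
  show ?thesis using 1 2 by (simp add: p v u det2_def smul_def vadd_def algebra_simps)
qed

lemma qt_ex: assumes "det2 p v = -1" "det2 v u = -1"
  shows "smul (qt p v u) v = vadd p u"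
proof -
  have "v \<noteq> (0,0)" using assms(1) by (auto simp: det2_def)
  thus ?thesis using qt_eq det_ex[OF assms] by metis
qed

definition q4 :: "vec \<Rightarrow> bool" where
  "q4 v = (0 \<le> fst v \<and> snd v \<le> 0 \<and> v \<noteq> (0,0))"

definition fk :: "vec \<Rightarrow> real" where
  "fk v = (if q4 v then - of_int (snd v) / (of_int (fst v) - of_int (snd v))
           else if v = (-1,0) then 2 else 3)"

lemma rsD:
  assumes "is_ray_seq vs"
  shows "length vs \<ge> 4" "vs ! 0 = (1, 0)" "vs ! (length vs - 3) = (0, -1)"
     "vs ! (length vs - 2) = (-1, 0)" "vs ! (length vs - 1) = (0, 1)"
     "\<And>i. i < length vs \<Longrightarrow> det2 (vs ! i) (vs ! ((i + 1) mod length vs)) = -1"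
     "\<And>i. 0 < i \<Longrightarrow> i < length vs - 3 \<Longrightarrow> fst (vs ! i) > 0 \<and> snd (vs ! i) < 0"
  using assms unfolding is_ray_seq_def Let_def by auto

lemma rs_det: assumes "is_ray_seq vs" "i + 1 < length vs"
  shows "det2 (vs ! i) (vs ! (i+1)) = -1"
  using rsD(6)[OF assms(1), of i] assms(2) by simp

lemma rs_q4: assumes "is_ray_seq vs" "k \<le> length vs - 3" shows "q4 (vs ! k)"
proof -
  consider "k = 0" | "0 < k \<and> k < length vs - 3" | "k = length vs - 3" using assms(2) by linarith
  thus ?thesis
  proof cases
    case 1 thus ?thesis using rsD(2)[OF assms(1)] by (simp add: q4_def)
  next
    case 2 thus ?thesis using rsD(7)[OF assms(1), of k] by (auto simp: q4_def)
  next
    case 3 thus ?thesis using rsD(3)[OF assms(1)] by (simp add: q4_def)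
  qed
qed

lemma fk_lt: assumes "q4 u" "q4 v" shows "fk u < fk v \<longleftrightarrow> det2 u v < 0"
proof -
  obtain a b where u: "u = (a,b)" by fastforce
  obtain c d where v: "v = (c,d)" by fastforce
  have a: "a \<ge> 0" "b \<le> 0" "a - b > 0" using assms(1) by (auto simp: u q4_def)
  have c: "c \<ge> 0" "d \<le> 0" "c - d > 0" using assms(2) by (auto simp: v q4_def)
  have "fk u < fk v \<longleftrightarrow> - real_of_int b / (real_of_int a - real_of_int b) < - real_of_int d / (real_of_int c - real_of_int d)"
    using assms by (simp add: fk_def u v)
  also have "\<dots> \<longleftrightarrow> - real_of_int b * (real_of_int c - real_of_int d) < - real_of_int d * (real_of_int a - real_of_int b)"
    using a c by (simp add: divide_simps)
  also have "\<dots> \<longleftrightarrow> (- b * (c - d) < - d * (a - b))"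
    by (metis (mono_tags, opaque_lifting) of_int_less_iff of_int_minus of_int_mult of_int_diff)
  also have "\<dots> \<longleftrightarrow> det2 u v < 0" by (simp add: u v det2_def algebra_simps)
  finally show ?thesis .
qed

lemma fk_le1: "q4 u \<Longrightarrow> fk u \<le> 1"
  by (cases u) (auto simp: fk_def q4_def divide_simps)

lemma rs_step: assumes "is_ray_seq vs" "i + 1 < length vs"
  shows "fk (vs ! i) < fk (vs ! (i+1))"
proof -
  note R = rsD[OF assms(1)]
  consider "i + 1 \<le> length vs - 3" | "i = length vs - 3" | "i = length vs - 2" using assms(2) by linarith
  thus ?thesis
  proof cases
    case 1
    thus ?thesis using fk_lt[OF rs_q4[OF assms(1)] rs_q4[OF assms(1)]] rs_det[OF assms] by auto
  next
    case 2
    have "i + 1 = length vs - 2" using 2 R(1) by linarith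
    thus ?thesis using 2 R(3) R(4) by (simp add: fk_def q4_def)
  next
    case 3
    have "i + 1 = length vs - 1" using 3 R(1) by linarith
    thus ?thesis using 3 R(4) R(5) by (simp add: fk_def q4_def)
  qed
qed

lemma rs_mono: assumes "is_ray_seq vs" "i < j" "j < length vs"
  shows "fk (vs ! i) < fk (vs ! j)"
  using assms(2,3)
proof (induction j)
  case 0 thus ?case by simp
next
  case (Suc j)
  have s: "fk (vs ! j) < fk (vs ! Suc j)" using rs_step[OF assms(1), of j] Suc.prems by simp
  show ?case
  proof (cases "i = j")
    case True thus ?thesis using s by simp
  next
    case False thus ?thesis using Suc s by force
  qed
qed

lemma rs_inj: assumes "is_ray_seq vs" "i < length vs" "j < length vs" "vs ! i = vs ! j"
  shows "i = j"
  using rs_mono[OF assms(1), of i j] rs_mono[OF assms(1), of j i] assms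
  by (metis less_irrefl linorder_neqE_nat)

lemma rs_sorted: assumes "is_ray_seq vs" shows "sorted_wrt (<) (map fk vs)"
  unfolding sorted_wrt_iff_nth_less using rs_mono[OF assms] by auto

lemma rs_set_unique: assumes "is_ray_seq vs" "is_ray_seq ws" "set vs = set ws"
  shows "vs = ws"
proof -
  have "map fk vs = map fk ws"
    using rs_sorted[OF assms(1)] rs_sorted[OF assms(2)] assms(3)
    by (intro sorted_distinct_set_unique) (auto simp: strict_sorted_iff)
  hence len: "length vs = length ws" and fe: "\<And>k. k < length vs \<Longrightarrow> fk (vs ! k) = fk (ws ! k)"
    by (metis length_map, metis length_map nth_map)
  show ?thesis
  proof (rule nth_equalityI)
    show "length vs = length ws" by fact
    fix k assume k: "k < length vs"
    have "ws ! k \<in> set vs" using assms(3) k len by auto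
    then obtain k' where k': "k' < length vs" "vs ! k' = ws ! k" by (auto simp: in_set_conv_nth)
    have "k' = k"
    proof (rule ccontr)
      assume "k' \<noteq> k"
      hence "fk (vs ! k') \<noteq> fk (vs ! k)" using rs_mono[OF assms(1), of k k'] rs_mono[OF assms(1), of k' k] k k'
        by (metis linorder_neqE_nat order_less_irrefl)
      thus False using fe[OF k] k' by simp
    qed
    thus "vs ! k = ws ! k" using k' by simp
  qed
qed

lemma fan_of_fst: "fst (fan_of vs) = set vs" by (simp add: fan_of_def)

lemma rays_list_eq: assumes "is_ray_seq vs" shows "rays_list (fan_of vs) = vs"
  unfolding rays_list_def
proof (rule the_equality)
  show "is_ray_seq vs \<and> fan_of vs = fan_of vs" using assms by simp
  fix ws assume "is_ray_seq ws \<and> fan_of ws = fan_of vs"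
  thus "ws = vs" using rs_set_unique[OF _ assms, of ws] fan_of_fst by metis
qed

lemma nrays_eq: "is_ray_seq vs \<Longrightarrow> nrays (fan_of vs) = length vs"
  by (simp add: nrays_def rays_list_eq)

definition pv :: "nat \<Rightarrow> nat \<Rightarrow> nat" where "pv n j = (j + n - 1) mod n"
definition nx :: "nat \<Rightarrow> nat \<Rightarrow> nat" where "nx n j = (j + 1) mod n"

definition qv :: "vec list \<Rightarrow> nat \<Rightarrow> int" where
  "qv vs j = qt (vs ! pv (length vs) j) (vs ! j) (vs ! nx (length vs) j)"

definition core :: "vec list \<Rightarrow> int list" where
  "core vs = map (qv vs) [0..<length vs - 2]"

lemma quiddity_eq: assumes "is_ray_seq vs"
  shows "quiddity (fan_of vs) = map (qv vs) [0..<length vs]"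
proof -
  let ?n = "length vs"
  have n: "?n \<ge> 4" using rsD(1)[OF assms] .
  have ray: "ray (fan_of vs) i = vs ! ((i + ?n - 1) mod ?n)" for i
    by (simp add: ray_def nrays_eq[OF assms] rays_list_eq[OF assms])
  have "quiddity (fan_of vs) = map (\<lambda>i. qv vs (i - 1)) [1..<?n + 1]"
    unfolding quiddity_def nrays_eq[OF assms]
  proof (rule map_cong[OF refl])
    fix i assume "i \<in> set [1..<?n + 1]"
    hence i: "1 \<le> i" "i \<le> ?n" by auto
    have e1: "(i + ?n - 1) mod ?n = i - 1" using i by (simp add: mod_if)
    have e2: "(i - 1 + ?n - 1) mod ?n = pv ?n (i - 1)" by (simp add: pv_def)
    have e3: "(i + 1 + ?n - 1) mod ?n = nx ?n (i - 1)" using i by (simp add: nx_def mod_add_self2)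
    show "(THE a. smul a (ray (fan_of vs) i) = vadd (ray (fan_of vs) (i - 1)) (ray (fan_of vs) (i + 1))) = qv vs (i - 1)"
      unfolding ray e1 e2 e3 qv_def qt_def ..
  qed
  also have "\<dots> = map (qv vs) [0..<?n]"
    by (simp add: map_Suc_upt[symmetric] comp_def del: upt_Suc)
  finally show ?thesis .
qed

lemma pv_pos: assumes "0 < j" "j < n" shows "pv n j = j - 1"
proof -
  have e: "j + n - 1 = (j - 1) + n" using assms by simp
  have "((j - 1) + n) mod n = j - 1" using assms by (simp only: mod_add_self2) simp
  thus ?thesis unfolding pv_def e .
qed
lemma pv_0: "0 < n \<Longrightarrow> pv n 0 = n - 1" by (simp add: pv_def)
lemma nx_lt': "j + 1 < n \<Longrightarrow> nx n j = j + 1" by (simp add: nx_def)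
lemma nx_last: "0 < n \<Longrightarrow> nx n (n - 1) = 0" by (simp add: nx_def)

lemma pv_lt: "0 < n \<Longrightarrow> pv n j < n" by (simp add: pv_def)
lemma nx_lt: "0 < n \<Longrightarrow> nx n j < n" by (simp add: nx_def)

lemma pv_nx: assumes "j < n" shows "nx n (pv n j) = j"
proof (cases "j = 0")
  case True thus ?thesis using assms pv_0[of n] by (simp add: nx_def)
next
  case False thus ?thesis using assms pv_pos[of j n] by (simp add: nx_def)
qed

lemma rs_qv_ex: assumes "is_ray_seq vs" "j < length vs"
  shows "smul (qv vs j) (vs ! j) = vadd (vs ! pv (length vs) j) (vs ! nx (length vs) j)"
proof -
  let ?n = "length vs"
  have d1: "det2 (vs ! pv ?n j) (vs ! j) = -1"
  proof -
    have n0: "0 < ?n" using assms(2) by linarith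
    have "pv ?n j < ?n" using pv_lt[OF n0] .
    thus ?thesis using rsD(6)[OF assms(1), of "pv ?n j"] pv_nx[OF assms(2)] by (simp add: nx_def)
  qed
  have d2: "det2 (vs ! j) (vs ! nx ?n j) = -1" using rsD(6)[OF assms] by (simp add: nx_def)
  show ?thesis unfolding qv_def by (rule qt_ex[OF d1 d2])
qed

lemma rs_qv_last: assumes "is_ray_seq vs"
  shows "qv vs (length vs - 2) = 0" "qv vs (length vs - 1) = 0"
proof -
  let ?n = "length vs"
  note R = rsD[OF assms]
  have a: "pv ?n (?n - 2) = ?n - 3" "nx ?n (?n - 2) = ?n - 1"
    using R(1) by (simp_all add: pv_pos nx_lt')
  show "qv vs (?n - 2) = 0" unfolding qv_def a R
    by (rule qt_eq) (auto simp: smul_def vadd_def)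
  have n0: "0 < ?n" using R(1) by linarith
  have b: "pv ?n (?n - 1) = ?n - 2" "nx ?n (?n - 1) = 0"
    using R(1) nx_last[OF n0] by (simp_all add: pv_pos)
  show "qv vs (?n - 1) = 0" unfolding qv_def b R
    by (rule qt_eq) (auto simp: smul_def vadd_def)
qed

lemma quiddity_core: assumes "is_ray_seq vs"
  shows "quiddity (fan_of vs) = core vs @ [0, 0]"
proof -
  let ?n = "length vs"
  have n: "?n \<ge> 4" using rsD(1)[OF assms] .
  have "[0..<?n] = [0..<?n - 2] @ [?n - 2, ?n - 1]"
  proof -
    define m where "m = ?n - 2"
    have m: "?n = Suc (Suc m)" using n by (simp add: m_def)
    show ?thesis unfolding m by simp
  qed
  thus ?thesis using rs_qv_last[OF assms] by (simp add: quiddity_eq[OF assms] core_def)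
qed

lemma core_len: "length (core vs) = length vs - 2" by (simp add: core_def)

lemma core_nth: "j < length vs - 2 \<Longrightarrow> core vs ! j = qv vs j" by (simp add: core_def)

lemma vadd_cancel: "vadd p u = vadd p u' \<Longrightarrow> u = u'"
  by (cases p; cases u; cases u') (simp add: vadd_def)

lemma core_unique: assumes vs: "is_ray_seq vs" and ws: "is_ray_seq ws"
  and len: "length vs = length ws" and c: "core vs = core ws"
  shows "vs = ws"
proof -
  let ?n = "length vs"
  note R = rsD[OF vs] and W = rsD[OF ws]
  have qe: "qv vs j = qv ws j" if "j < ?n - 2" for j
    using core_nth[of j vs] core_nth[of j ws] that len c by simp
  have key: "k \<le> ?n - 3 \<longrightarrow> vs ! k = ws ! k \<and> (1 \<le> k \<longrightarrow> vs ! (k - 1) = ws ! (k - 1))" for k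
  proof (induction k)
    case 0 thus ?case using R(2) W(2) by simp
  next
    case (Suc k)
    show ?case
    proof
      assume k: "Suc k \<le> ?n - 3"
      hence IH: "vs ! k = ws ! k" "1 \<le> k \<longrightarrow> vs ! (k - 1) = ws ! (k - 1)" using Suc.IH by auto
      have kn: "k < ?n" "k + 1 < ?n" "k < ?n - 2" using k R(1) by linarith+
      have P: "vs ! pv ?n k = ws ! pv ?n k"
      proof (cases "k = 0")
        case True
        have "0 < ?n" using R(1) by linarith
        thus ?thesis using True R(5) W(5) len by (simp add: pv_0)
      next
        case False thus ?thesis using IH(2) kn by (simp add: pv_pos)
      qed
      have e1: "smul (qv vs k) (vs ! k) = vadd (vs ! pv ?n k) (vs ! (k+1))"
        using rs_qv_ex[OF vs kn(1)] nx_lt'[OF kn(2)] by simp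
      have e2: "smul (qv ws k) (ws ! k) = vadd (ws ! pv ?n k) (ws ! (k+1))"
        using rs_qv_ex[OF ws, of k] kn len nx_lt'[of k ?n] by simp
      have "vs ! (k+1) = ws ! (k+1)"
        using e1 e2 qe[OF kn(3)] IH(1) P vadd_cancel by metis
      thus "vs ! Suc k = ws ! Suc k \<and> (1 \<le> Suc k \<longrightarrow> vs ! (Suc k - 1) = ws ! (Suc k - 1))"
        using IH(1) by simp
    qed
  qed
  show ?thesis
  proof (rule nth_equalityI)
    show "length vs = length ws" by fact
    fix k assume k: "k < ?n"
    consider "k \<le> ?n - 3" | "k = ?n - 2" | "k = ?n - 1" using k by linarith
    thus "vs ! k = ws ! k"
      by cases (use key R W len in auto)
  qed
qed

definition Mf :: "int \<Rightarrow> vec \<Rightarrow> vec" where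
  "Mf l = (\<lambda>(x, y). (- y, x + l * y))"

definition lof :: "fan \<Rightarrow> int" where
  "lof S = (THE l. {(1, 0), (l, -1)} \<in> snd S)"

lemma rho_alt: "rho S = (Mf (lof S) ` ((fst S - {(0, 1)}) \<union> {(- lof S, 1)}),
   (\<lambda>c. Mf (lof S) ` c) ` ((snd S - {{(1, 0), (0, 1)}, {(-1, 0), (0, 1)}})
                    \<union> {vneg ` {(1, 0), (lof S, -1)}, {(- lof S, 1), (1, 0)}}))"
  unfolding rho_def Mf_def lof_def Let_def ..

definition cn :: "vec list \<Rightarrow> nat \<Rightarrow> vec set" where
  "cn xs j = {xs ! j, xs ! ((j + 1) mod length xs)}"

lemma fan_of_cn: "fan_of xs = (set xs, cn xs ` {..<length xs})"
  unfolding fan_of_def cn_def by auto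

lemma fan_of_map: "fan_of (map f xs) = (f ` set xs, (\<lambda>c. f ` c) ` snd (fan_of xs))"
proof -
  have "cn (map f xs) j = f ` cn xs j" if "j < length xs" for j
  proof -
    have "0 < length xs" using that by linarith
    hence "(j + 1) mod length xs < length xs" by (rule mod_less_divisor)
    thus ?thesis using that by (simp add: cn_def)
  qed
  hence "cn (map f xs) ` {..<length xs} = (\<lambda>j. f ` cn xs j) ` {..<length xs}"
    by (intro image_cong) auto
  hence "cn (map f xs) ` {..<length xs} = (\<lambda>c. f ` c) ` (cn xs ` {..<length xs})"
    by (simp add: image_image)
  thus ?thesis by (simp add: fan_of_cn)
qed

lemma rs_v2: assumes "is_ray_seq vs" shows "vs ! 1 = (fst (vs ! 1), -1)"
proof -
  have "det2 (vs ! 0) (vs ! 1) = -1" using rs_det[OF assms, of 0] rsD(1)[OF assms] by simp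
  thus ?thesis using rsD(2)[OF assms] by (cases "vs ! 1") (simp add: det2_def)
qed

lemma lof_eq: assumes vs: "is_ray_seq vs" shows "lof (fan_of vs) = fst (vs ! 1)"
  unfolding lof_def
proof (rule the_equality)
  let ?n = "length vs"
  note R = rsD[OF vs]
  have "cn vs 0 = {(1,0), vs ! 1}" using R(1,2) by (simp add: cn_def)
  moreover have "0 < ?n" using R(1) by linarith
  ultimately show "{(1, 0), (fst (vs ! 1), -1)} \<in> snd (fan_of vs)"
    using rs_v2[OF vs] unfolding fan_of_cn by (metis image_eqI lessThan_iff snd_conv)
  fix l assume "{(1, 0), (l, -1)} \<in> snd (fan_of vs)"
  then obtain i where i: "i < ?n" "{(1, 0), (l, -1)} = {vs ! i, vs ! ((i + 1) mod ?n)}"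
    unfolding fan_of_cn cn_def by auto
  have "0 < ?n" using R(1) by linarith
  hence im: "(i + 1) mod ?n < ?n" by (rule mod_less_divisor)
  show "l = fst (vs ! 1)"
  proof (cases "vs ! i = (1, 0)")
    case True
    have "0 < ?n" using R(1) by linarith
    hence "i = 0" using rs_inj[OF vs i(1), of 0] R(1,2) True by simp
    hence "{(1,0),(l,-1)} = {(1,0), vs ! 1}" using i(2) R(1) R(2) by simp
    hence "(l, -1) = vs ! 1" by (auto simp: doubleton_eq_iff)
    thus ?thesis by (metis fst_conv)
  next
    case False
    hence "vs ! ((i + 1) mod ?n) = (1,0)" "vs ! i = (l, -1)" using i(2) by (auto simp: doubleton_eq_iff)
    have "0 < ?n" using R(1) by linarith
    hence "(i + 1) mod ?n = 0" using rs_inj[OF vs im, of 0] R(1,2) \<open>vs ! ((i + 1) mod ?n) = (1,0)\<close> by simp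
    hence "i = ?n - 1" using i(1) by (metis Suc_eq_plus1 add_diff_cancel_right' mod_Suc mod_less nat.distinct(1) zero_less_Suc)
    thus ?thesis using R(5) \<open>vs ! i = (l, -1)\<close> by simp
  qed
qed

lemma Mf_simp: "Mf l (x, y) = (- y, x + l * y)" by (simp add: Mf_def)

lemma Mf_det: "det2 (Mf l a) (Mf l b) = det2 a b"
  by (cases a; cases b) (simp add: Mf_def det2_def algebra_simps)

lemma Mf_inj: "Mf l a = Mf l b \<Longrightarrow> a = b"
  by (cases a; cases b) (auto simp: Mf_def)

lemma Mf_smul: "Mf l (smul a v) = smul a (Mf l v)"
  by (cases v) (simp add: Mf_def smul_def algebra_simps)

lemma Mf_vadd: "Mf l (vadd p u) = vadd (Mf l p) (Mf l u)"
  by (cases p; cases u) (simp add: Mf_def vadd_def algebra_simps)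

lemma qt_Mf: "qt (Mf l p) (Mf l v) (Mf l u) = qt p v u"
proof -
  have "smul a (Mf l v) = vadd (Mf l p) (Mf l u) \<longleftrightarrow> smul a v = vadd p u" for a
    by (metis Mf_smul Mf_vadd Mf_inj)
  thus ?thesis unfolding qt_def by simp
qed

lemma qv_map_Mf: "qv (map (Mf l) xs) j = qv xs j" if "j < length xs"
proof -
  have n: "0 < length xs" using that by linarith
  show ?thesis using that pv_lt[OF n, of j] nx_lt[OF n, of j] by (simp add: qv_def qt_Mf)
qed

definition rl :: "vec list \<Rightarrow> vec list" where
  "rl vs = map (\<lambda>j. if j < length vs - 2 then vs ! (j + 1)
                     else if j = length vs - 2 then (- fst (vs ! 1), 1) else (1, 0)) [0..<length vs]"

definition rot :: "vec list \<Rightarrow> vec list" where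
  "rot vs = map (Mf (fst (vs ! 1))) (rl vs)"

lemma rl_len: "length (rl vs) = length vs" by (simp add: rl_def)
lemma rot_len: "length (rot vs) = length vs" by (simp add: rot_def rl_len)

lemma rl_nth: "j < length vs \<Longrightarrow> rl vs ! j = (if j < length vs - 2 then vs ! (j + 1)
                     else if j = length vs - 2 then (- fst (vs ! 1), 1) else (1, 0))"
  by (simp add: rl_def)

lemma rs_01: assumes vs: "is_ray_seq vs" "k < length vs" "vs ! k = (0, 1)" shows "k = length vs - 1"
proof -
  have "length vs - 1 < length vs" using rsD(1)[OF vs(1)] by linarith
  thus ?thesis using rs_inj[OF vs(1) vs(2), of "length vs - 1"] rsD(5)[OF vs(1)] vs(3) by simp
qed

lemma rho_fan: assumes vs: "is_ray_seq vs" shows "rho (fan_of vs) = fan_of (rot vs)"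
proof -
  let ?n = "length vs"
  let ?l = "fst (vs ! 1)"
  let ?r = "rl vs"
  note R = rsD[OF vs]
  have n0: "0 < ?n" using R(1) by linarith
  have v1: "vs ! 1 = (?l, -1)" using rs_v2[OF vs] .
  have rn: "\<And>j. j < ?n \<Longrightarrow> ?r ! j = (if j < ?n - 2 then vs ! (j + 1)
                     else if j = ?n - 2 then (- ?l, 1) else (1, 0))" using rl_nth by blast
  have rlen: "length ?r = ?n" by (rule rl_len)
  have S1: "(set vs - {(0, 1)}) \<union> {(- ?l, 1)} = set ?r"
  proof
    show "(set vs - {(0, 1)}) \<union> {(- ?l, 1)} \<subseteq> set ?r"
    proof
      fix x assume "x \<in> (set vs - {(0, 1)}) \<union> {(- ?l, 1)}"
      then consider "x = (- ?l, 1)" | k where "k < ?n" "x = vs ! k" "x \<noteq> (0,1)"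
        by (auto simp: in_set_conv_nth)
      thus "x \<in> set ?r"
      proof cases
        case 1
        have "?r ! (?n - 2) = (- ?l, 1)" using rn[of "?n - 2"] n0 by simp
        thus ?thesis using 1 rlen n0 by (metis nth_mem diff_less zero_less_numeral)
      next
        case 2
        have "k \<noteq> ?n - 1" using 2 R(5) by auto
        show ?thesis
        proof (cases "k = 0")
          case True
          have "\<not> (?n - 1 < ?n - 2)" "?n - 1 \<noteq> ?n - 2" "?n - 1 < ?n" using R(1) by linarith+
          hence "?r ! (?n - 1) = (1, 0)" using rn[of "?n - 1"] by simp
          thus ?thesis using True 2 R(2) rlen n0 by (metis nth_mem diff_less zero_less_one)
        next
          case False
          have "k - 1 < ?n - 2" "k - 1 < ?n" "k - 1 + 1 = k" using False 2 \<open>k \<noteq> ?n - 1\<close> by linarith+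
          hence "?r ! (k - 1) = vs ! k" using rn[of "k - 1"] by simp
          moreover have "k - 1 < ?n" using 2 by linarith
          ultimately show ?thesis using 2 rlen by (metis nth_mem)
        qed
      qed
    qed
    show "set ?r \<subseteq> (set vs - {(0, 1)}) \<union> {(- ?l, 1)}"
    proof
      fix x assume "x \<in> set ?r"
      then obtain j where j: "j < ?n" "x = ?r ! j" using rlen by (auto simp: in_set_conv_nth)
      consider "j < ?n - 2" | "j = ?n - 2" | "j = ?n - 1" using j by linarith
      thus "x \<in> (set vs - {(0, 1)}) \<union> {(- ?l, 1)}"
      proof cases
        case 1
        hence x: "x = vs ! (j + 1)" "j + 1 < ?n" using rn j by auto
        hence "x \<noteq> (0,1)" using rs_01[OF vs x(2)] 1 by auto
        thus ?thesis using x by auto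
      next
        case 2 thus ?thesis using rn j by auto
      next
        case 3
        hence "x = (1, 0)" using rn j R(1) by auto
        thus ?thesis using R(2) n0 by (metis Diff_iff UnI1 nth_mem singletonD prod.inject zero_neq_one)
      qed
    qed
  qed
  define A where "A = {(1::int, 0::int), (0::int, 1::int)}"
  define B where "B = {(-1::int, 0::int), (0::int, 1::int)}"
  have cA: "cn vs (?n - 1) = A" using R(1,2,5) n0 nx_last[OF n0] by (simp add: cn_def A_def nx_def insert_commute)
  have cB: "cn vs (?n - 2) = B"
  proof -
    have e: "Suc (?n - 2) = ?n - 1" "Suc (?n - 2) < ?n" using R(1) by linarith+
    hence "vs ! Suc (?n - 2) = (0,1)" using R(5) by simp
    thus ?thesis using R(4) e(2) by (simp add: cn_def B_def)
  qed
  have cnot: "(0, 1) \<notin> cn vs j" if "j < ?n - 2" for j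
  proof -
    have jj: "j < ?n" "j + 1 < ?n" using that by linarith+
    have "vs ! j \<noteq> (0,1)"
    proof
      assume "vs ! j = (0,1)" thus False using rs_01[OF vs jj(1)] that by linarith
    qed
    moreover have "vs ! (j+1) \<noteq> (0,1)"
    proof
      assume "vs ! (j+1) = (0,1)" thus False using rs_01[OF vs jj(2)] that by linarith
    qed
    moreover have "(j + 1) mod ?n = j + 1" using that by simp
    ultimately show ?thesis by (simp add: cn_def)
  qed
  have C1: "cn vs ` {..<?n} - {A, B} = cn vs ` {..<?n - 2}"
  proof
    show "cn vs ` {..<?n} - {A, B} \<subseteq> cn vs ` {..<?n - 2}"
    proof
      fix c assume "c \<in> cn vs ` {..<?n} - {A, B}"
      then obtain j where j: "j < ?n" "c = cn vs j" "c \<noteq> A" "c \<noteq> B" by auto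
      have "j \<noteq> ?n - 1" "j \<noteq> ?n - 2" using j cA cB by auto
      hence "j < ?n - 2" using j(1) by linarith
      thus "c \<in> cn vs ` {..<?n - 2}" using j by auto
    qed
    show "cn vs ` {..<?n - 2} \<subseteq> cn vs ` {..<?n} - {A, B}"
    proof
      fix c assume "c \<in> cn vs ` {..<?n - 2}"
      then obtain j where j: "j < ?n - 2" "c = cn vs j" by auto
      have "c \<noteq> A" "c \<noteq> B" using cnot[OF j(1)] j(2) by (auto simp: A_def B_def)
      thus "c \<in> cn vs ` {..<?n} - {A, B}" using j by auto
    qed
  qed
  define C where "C = vneg ` {(1, 0), (?l, -1)}"
  define D where "D = {(- ?l, 1), (1::int, 0::int)}"
  have C_eq: "C = {(-1, 0), (- ?l, 1)}" by (simp add: C_def vneg_def)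
  have r1: "cn ?r j = cn vs (j + 1)" if "j < ?n - 3" for j
  proof -
    have jj: "j < ?n" "j < ?n - 2" "j + 1 < ?n" "j + 1 < ?n - 2" "j + 2 < ?n" using that by linarith+
    have "(j + 1) mod ?n = j + 1" "(j + 1 + 1) mod ?n = j + 2" using jj by simp_all
    moreover have "?r ! j = vs ! (j+1)" "?r ! (j+1) = vs ! (j + 1 + 1)" using rn[OF jj(1)] rn[OF jj(3)] jj by simp_all
    ultimately show ?thesis using rlen by (simp add: cn_def)
  qed
  have r2: "cn ?r (?n - 3) = C"
  proof -
    have "(?n - 3 + 1) mod ?n = ?n - 2" using R(1) by simp
    thus ?thesis using rn[of "?n - 3"] rn[of "?n - 2"] R(1,4) rlen C_eq
      by (simp add: cn_def)
  qed
  have r3: "cn ?r (?n - 2) = D"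
  proof -
    have "(?n - 2 + 1) mod ?n = ?n - 1" using R(1) by simp
    thus ?thesis using rn[of "?n - 1"] rn[of "?n - 2"] R(1) rlen by (simp add: cn_def D_def)
  qed
  have r4: "cn ?r (?n - 1) = cn vs 0"
  proof -
    have e: "(?n - 1 + 1) mod ?n = 0" using nx_last[OF n0] by (simp add: nx_def)
    have f: "\<not> (?n - 1 < ?n - 2)" "?n - 1 \<noteq> ?n - 2" "?n - 1 < ?n" "0 < ?n - 2" using R(1) by linarith+
    have "?r ! (?n - 1) = (1, 0)" using rn[OF f(3)] f by simp
    moreover have "?r ! 0 = vs ! 1" using rn[OF n0] f by simp
    ultimately show ?thesis using e R(1) R(2) rlen unfolding cn_def by (simp add: insert_commute)
  qed
  have C2: "cn ?r ` {..<?n} = cn vs ` {..<?n - 2} \<union> {C, D}"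
  proof
    show "cn ?r ` {..<?n} \<subseteq> cn vs ` {..<?n - 2} \<union> {C, D}"
    proof
      fix c assume "c \<in> cn ?r ` {..<?n}"
      then obtain j where j: "j < ?n" "c = cn ?r j" by auto
      consider "j < ?n - 3" | "j = ?n - 3" | "j = ?n - 2" | "j = ?n - 1" using j(1) by linarith
      thus "c \<in> cn vs ` {..<?n - 2} \<union> {C, D}"
      proof cases
        case 1 thus ?thesis using j r1 by force
      next
        case 2 thus ?thesis using j r2 by simp
      next
        case 3 thus ?thesis using j r3 by simp
      next
        case 4
        have "0 < ?n - 2" using R(1) by linarith
        thus ?thesis using j r4 4 by force
      qed
    qed
    show "cn vs ` {..<?n - 2} \<union> {C, D} \<subseteq> cn ?r ` {..<?n}"
    proof
      fix c assume "c \<in> cn vs ` {..<?n - 2} \<union> {C, D}"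
      then consider k where "k < ?n - 2" "c = cn vs k" | "c = C" | "c = D" by auto
      thus "c \<in> cn ?r ` {..<?n}"
      proof cases
        case 1
        show ?thesis
        proof (cases "k = 0")
          case True
          have "?n - 1 < ?n" using n0 by simp
          thus ?thesis using True 1 r4 by (metis image_eqI lessThan_iff)
        next
          case False
          have "k - 1 < ?n - 3" "k - 1 < ?n" using 1 False by linarith+
          moreover have "cn ?r (k - 1) = c" using r1[of "k - 1"] 1 False calculation by simp
          ultimately show ?thesis by (metis image_eqI lessThan_iff)
        qed
      next
        case 2
        have "?n - 3 < ?n" using n0 by simp
        thus ?thesis using 2 r2 by (metis image_eqI lessThan_iff)
      next
        case 3
        have "?n - 2 < ?n" using n0 by simp
        thus ?thesis using 3 r3 by (metis image_eqI lessThan_iff)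
      qed
    qed
  qed
  have lof: "lof (fan_of vs) = ?l" by (rule lof_eq[OF vs])
  have S2: "(snd (fan_of vs) - {{(1, 0), (0, 1)}, {(-1, 0), (0, 1)}})
                    \<union> {vneg ` {(1, 0), (?l, -1)}, {(- ?l, 1), (1, 0)}} = snd (fan_of ?r)"
    using C1 C2 unfolding fan_of_cn rlen A_def B_def C_def D_def by simp
  show ?thesis
    unfolding rho_alt lof rot_def fan_of_map
    using S1 S2 by (simp add: fan_of_fst)
qed

lemma rot_nth: "j < length vs \<Longrightarrow> rot vs ! j = Mf (fst (vs ! 1)) (rl vs ! j)"
  by (simp add: rot_def rl_len)

lemma rl_a: "j < length vs - 2 \<Longrightarrow> rl vs ! j = vs ! (j + 1)"
  by (simp add: rl_nth)
lemma rl_b: "2 \<le> length vs \<Longrightarrow> rl vs ! (length vs - 2) = (- fst (vs ! 1), 1)"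
  by (simp add: rl_nth)
lemma rl_c: "2 \<le> length vs \<Longrightarrow> rl vs ! (length vs - 1) = (1, 0)"
proof -
  assume a: "2 \<le> length vs"
  hence "length vs - 1 < length vs" "\<not> length vs - 1 < length vs - 2" "length vs - 1 \<noteq> length vs - 2" by linarith+
  thus ?thesis using rl_nth[of "length vs - 1" vs] by simp
qed

lemma rot_rs: assumes vs: "is_ray_seq vs" shows "is_ray_seq (rot vs)"
proof -
  let ?n = "length vs"
  let ?l = "fst (vs ! 1)"
  let ?w = "rot vs"
  note R = rsD[OF vs]
  obtain a where v1: "vs ! 1 = (a, -1)" using rs_v2[OF vs] by metis
  have la: "?l = a" using v1 by simp
  have len: "length ?w = ?n" by (rule rot_len)
  have w0: "?w ! 0 = (1, 0)"
  proof -
    have "0 < ?n - 2" "0 < ?n" using R(1) by linarith+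
    thus ?thesis using rot_nth[of 0 vs] rl_a[of 0 vs] v1 la by (simp add: Mf_def)
  qed
  have w3: "?w ! (?n - 3) = (0, -1)"
  proof -
    have "?n - 3 < ?n - 2" "?n - 3 < ?n" "?n - 3 + 1 = ?n - 2" using R(1) by linarith+
    thus ?thesis using rot_nth[of "?n - 3" vs] rl_a[of "?n - 3" vs] R(4) by (simp add: Mf_def)
  qed
  have w2: "?w ! (?n - 2) = (-1, 0)"
  proof -
    have "?n - 2 < ?n" "2 \<le> ?n" using R(1) by linarith+
    thus ?thesis using rot_nth[of "?n - 2" vs] rl_b[of vs] by (simp add: Mf_def)
  qed
  have w1: "?w ! (?n - 1) = (0, 1)"
  proof -
    have "?n - 1 < ?n" "2 \<le> ?n" using R(1) by linarith+
    thus ?thesis using rot_nth[of "?n - 1" vs] rl_c[of vs] by (simp add: Mf_def)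
  qed
  have det: "det2 (?w ! j) (?w ! ((j + 1) mod ?n)) = -1" if j: "j < ?n" for j
  proof -
    have "0 < ?n" using j by linarith
    hence jm: "(j + 1) mod ?n < ?n" by (rule mod_less_divisor)
    have "det2 (?w ! j) (?w ! ((j + 1) mod ?n)) = det2 (rl vs ! j) (rl vs ! ((j + 1) mod ?n))"
      using rot_nth[OF j] rot_nth[OF jm] Mf_det by simp
    also have "\<dots> = -1"
    proof -
      consider "j < ?n - 3" | "j = ?n - 3" | "j = ?n - 2" | "j = ?n - 1" using j by linarith
      thus ?thesis
      proof cases
        case 1
        have a: "j < ?n - 2" "j + 1 < ?n - 2" "(j + 1) mod ?n = j + 1" "j + 1 + 1 < ?n" using 1 by simp_all
        thus ?thesis using rl_a[OF a(1)] rl_a[OF a(2)] rs_det[OF vs a(4)] by simp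
      next
        case 2
        have a: "j < ?n - 2" "(j + 1) mod ?n = ?n - 2" "j + 1 = ?n - 2" "2 \<le> ?n" using 2 R(1) by simp_all
        thus ?thesis using rl_a[OF a(1)] rl_b[OF a(4)] R(4) by (simp add: det2_def)
      next
        case 3
        have a: "(j + 1) mod ?n = ?n - 1" "2 \<le> ?n" using 3 R(1) by simp_all
        thus ?thesis using 3 rl_b[OF a(2)] rl_c[OF a(2)] by (simp add: det2_def)
      next
        case 4
        have "0 < ?n" using R(1) by linarith
        hence "(?n - 1 + 1) mod ?n = 0" using nx_last unfolding nx_def by blast
        hence a: "(j + 1) mod ?n = 0" "2 \<le> ?n" "0 < ?n - 2" using 4 R(1) by simp_all
        thus ?thesis using 4 rl_c[OF a(2)] rl_a[OF a(3)] v1 by (simp add: det2_def)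
      qed
    qed
    finally show ?thesis .
  qed
  have sg: "fst (?w ! j) > 0 \<and> snd (?w ! j) < 0" if j: "0 < j" "j < ?n - 3" for j
  proof -
    have a: "j < ?n" "j < ?n - 2" "j + 1 \<le> ?n - 3" "1 < j + 1" "j + 1 < ?n" "1 \<le> ?n - 3" using j by linarith+
    have wj: "?w ! j = Mf ?l (vs ! (j + 1))" using rot_nth[OF a(1)] rl_a[OF a(2)] by simp
    have y: "snd (vs ! (j + 1)) < 0"
    proof (cases "j + 1 < ?n - 3")
      case True thus ?thesis using R(7)[of "j+1"] by simp
    next
      case False hence "j + 1 = ?n - 3" using a by linarith
      thus ?thesis using R(3) by simp
    qed
    have "fk (vs ! 1) < fk (vs ! (j + 1))" using rs_mono[OF vs a(4) a(5)] .
    hence "det2 (vs ! 1) (vs ! (j + 1)) < 0" using fk_lt rs_q4[OF vs a(3)] rs_q4[OF vs a(6)] by blast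
    hence x: "fst (vs ! (j + 1)) + ?l * snd (vs ! (j + 1)) < 0"
      using v1 la by (cases "vs ! (j + 1)") (simp add: det2_def algebra_simps)
    show ?thesis using wj x y by (cases "vs ! (j + 1)") (simp add: Mf_def)
  qed
  show ?thesis unfolding is_ray_seq_def Let_def len
    using R(1) w0 w1 w2 w3 det sg by auto
qed

lemma rot_core: assumes vs: "is_ray_seq vs" shows "core (rot vs) = rotate1 (core vs)"
proof (rule nth_equalityI)
  let ?n = "length vs"
  let ?l = "fst (vs ! 1)"
  let ?r = "rl vs"
  note R = rsD[OF vs]
  obtain a where v1: "vs ! 1 = (a, -1)" using rs_v2[OF vs] by metis
  have la: "?l = a" using v1 by simp
  have n0: "0 < ?n" using R(1) by linarith
  show "length (core (rot vs)) = length (rotate1 (core vs))" by (simp add: core_len rot_len)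
  fix j assume "j < length (core (rot vs))"
  hence j: "j < ?n - 2" by (simp add: core_len rot_len)
  have jn: "j < ?n" using j by linarith
  have "core (rot vs) ! j = qv ?r j"
    using core_nth[of j "rot vs"] j qv_map_Mf[of j ?r ?l] by (simp add: rot_len rot_def rl_len)
  also have "\<dots> = rotate1 (core vs) ! j"
  proof -
    have rot: "rotate1 (core vs) ! j = core vs ! (Suc j mod (?n - 2))"
      using nth_rotate1[of j "core vs"] j by (simp add: core_len)
    show ?thesis
    proof (cases "j < ?n - 3")
      case True
      have e: "Suc j mod (?n - 2) = j + 1" "j + 1 < ?n - 2" "j + 1 < ?n" using True by simp_all
      have nxr: "?r ! nx ?n j = vs ! nx ?n (j + 1)"
      proof -
        have "nx ?n j = j + 1" "nx ?n (j+1) = j + 2" using True by (simp_all add: nx_lt')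
        thus ?thesis using rl_a[OF e(2)] by simp
      qed
      have pvr: "?r ! pv ?n j = vs ! pv ?n (j + 1)"
      proof (cases "j = 0")
        case True
        have "pv ?n 0 = ?n - 1" "pv ?n 1 = 0" using pv_0[OF n0] pv_pos[of 1 ?n] R(1) by simp_all
        thus ?thesis using True rl_c[of vs] R(1,2) by simp
      next
        case False
        have "pv ?n j = j - 1" "pv ?n (j + 1) = j" "j - 1 < ?n - 2" "j - 1 + 1 = j"
          using False jn e pv_pos[of j ?n] pv_pos[of "j+1" ?n] by simp_all
        thus ?thesis using rl_a[of "j - 1" vs] by simp
      qed
      have "qv ?r j = qv vs (j + 1)"
        unfolding qv_def rl_len using nxr pvr rl_a[OF j] by simp
      thus ?thesis using rot e core_nth[OF e(2)] by simp
    next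
      case False
      hence jj: "j = ?n - 3" using j by linarith
      have "Suc j = ?n - 2" using jj R(1) by linarith
      hence e: "Suc j mod (?n - 2) = 0" by simp
      have p: "pv ?n j = ?n - 4" "nx ?n j = ?n - 2" using jj R(1) pv_pos[of j ?n] nx_lt'[of j ?n] by simp_all
      have r4: "?r ! (?n - 4) = (0, -1)"
      proof -
        have "?n - 4 < ?n - 2" "?n - 4 + 1 = ?n - 3" using R(1) by linarith+
        thus ?thesis using rl_a[of "?n - 4" vs] R(3) by simp
      qed
      have r3: "?r ! j = (-1, 0)"
      proof -
        have "j + 1 = ?n - 2" using jj R(1) by linarith
        thus ?thesis using rl_a[OF j] R(4) by simp
      qed
      have r2: "?r ! (?n - 2) = (- a, 1)" using rl_b[of vs] R(1) la by simp
      have "qv ?r j = a"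
        unfolding qv_def rl_len p r4 r3 r2 by (rule qt_eq) (auto simp: smul_def vadd_def)
      moreover have "qv vs 0 = a"
      proof -
        have "pv ?n 0 = ?n - 1" "nx ?n 0 = 1" using pv_0[OF n0] nx_lt'[of 0 ?n] R(1) by simp_all
        thus ?thesis unfolding qv_def using R(2,5) v1 by (intro qt_eq) (auto simp: smul_def vadd_def)
      qed
      moreover have "0 < ?n - 2" using R(1) by linarith
      ultimately show ?thesis using rot e core_nth[of 0 vs] by simp
    qed
  qed
  finally show "core (rot vs) ! j = rotate1 (core vs) ! j" .
qed

definition sd :: "vec list \<Rightarrow> nat \<Rightarrow> vec list" where
  "sd vs i = map (\<lambda>j. if j < i then vs ! j else if j = i then vadd (vs ! (i - 1)) (vs ! i)
                      else vs ! (j - 1)) [0..<length vs + 1]"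

lemma sd_len: "length (sd vs i) = length vs + 1" by (simp add: sd_def)
lemma sd_lt: "j < i \<Longrightarrow> i \<le> length vs \<Longrightarrow> sd vs i ! j = vs ! j"
proof -
  assume "j < i" "i \<le> length vs"
  hence "j < length vs + 1" by linarith
  thus ?thesis using \<open>j < i\<close> by (simp add: sd_def nth_append del: upt_Suc)
qed
lemma sd_eq: "i \<le> length vs \<Longrightarrow> sd vs i ! i = vadd (vs ! (i - 1)) (vs ! i)"
proof -
  assume "i \<le> length vs"
  hence "i < length vs + 1" by linarith
  thus ?thesis by (simp add: sd_def del: upt_Suc)
qed
lemma sd_gt: "i < j \<Longrightarrow> j \<le> length vs \<Longrightarrow> sd vs i ! j = vs ! (j - 1)"
proof -
  assume "i < j" "j \<le> length vs"
  hence "j < length vs + 1" by linarith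
  thus ?thesis using \<open>i < j\<close> by (simp add: sd_def del: upt_Suc)
qed

lemma cn_lt: "k + 1 < length xs \<Longrightarrow> cn xs k = {xs ! k, xs ! (k + 1)}"
  by (simp add: cn_def)
lemma cn_last: "0 < length xs \<Longrightarrow> cn xs (length xs - 1) = {xs ! (length xs - 1), xs ! 0}"
  using nx_last[of "length xs"] by (simp add: cn_def nx_def)

lemma facet_eq: assumes vs: "is_ray_seq vs" "1 \<le> i" "i + 1 < length vs"
  shows "facet (fan_of vs) i = (vs ! (i - 1), vs ! i)"
proof -
  have r: "ray (fan_of vs) k = vs ! pv (length vs) k" for k
    by (simp add: ray_def nrays_eq[OF vs(1)] rays_list_eq[OF vs(1)] pv_def)
  have "pv (length vs) i = i - 1" "pv (length vs) (i + 1) = i" using vs pv_pos[of i "length vs"] pv_pos[of "i+1" "length vs"] by simp_all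
  thus ?thesis by (simp add: facet_def r)
qed

lemma q4_ne: "q4 v \<Longrightarrow> v \<noteq> (0,0)" by (simp add: q4_def)

lemma sd_fan: assumes vs: "is_ray_seq vs" and i: "1 \<le> i" "i \<le> length vs - 3"
  shows "subdiv (vs ! (i - 1), vs ! i) (fan_of vs) = fan_of (sd vs i)"
proof -
  let ?n = "length vs"
  let ?u = "vs ! (i - 1)" let ?v = "vs ! i" let ?w = "vadd (vs ! (i - 1)) (vs ! i)"
  let ?s = "sd vs i"
  note R = rsD[OF vs]
  have n0: "0 < ?n" using R(1) by linarith
  have iN: "i \<le> ?n" "i + 1 < ?n" "i - 1 < ?n" "i < ?n" using i R(1) by linarith+
  have S1: "insert ?w (set vs) = set ?s"
  proof
    show "insert ?w (set vs) \<subseteq> set ?s"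
    proof
      fix x assume "x \<in> insert ?w (set vs)"
      then consider "x = ?w" | k where "k < ?n" "x = vs ! k" by (auto simp: in_set_conv_nth)
      thus "x \<in> set ?s"
      proof cases
        case 1 thus ?thesis using sd_eq[OF iN(1)] nth_mem[of i ?s] sd_len[of vs i] iN by simp
      next
        case 2
        show ?thesis
        proof (cases "k < i")
          case True thus ?thesis using 2 sd_lt[OF True iN(1)] nth_mem[of k ?s] sd_len[of vs i] by simp
        next
          case False
          hence "i < k + 1" "k + 1 \<le> ?n" using 2 by linarith+
          thus ?thesis using 2 sd_gt[of i "k+1" vs] nth_mem[of "k+1" ?s] sd_len[of vs i] by simp
        qed
      qed
    qed
    show "set ?s \<subseteq> insert ?w (set vs)"
    proof
      fix x assume "x \<in> set ?s"
      then obtain j where j: "j < ?n + 1" "x = ?s ! j" by (auto simp: in_set_conv_nth sd_len)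
      consider "j < i" | "j = i" | "i < j" by linarith
      thus "x \<in> insert ?w (set vs)"
      proof cases
        case 1 thus ?thesis using j sd_lt[OF 1 iN(1)] iN by simp
      next
        case 2 thus ?thesis using j sd_eq[OF iN(1)] by simp
      next
        case 3
        have "j - 1 < ?n" "j \<le> ?n" using j 3 by linarith+
        thus ?thesis using j sd_gt[OF 3] by simp
      qed
    qed
  qed
  have cU: "cn vs (i - 1) = {?u, ?v}" using cn_lt[of "i - 1" vs] iN i by simp
  have cnU: "cn vs k = {?u, ?v} \<longleftrightarrow> k = i - 1" if k: "k < ?n" for k
  proof
    assume "k = i - 1" thus "cn vs k = {?u, ?v}" using cU by simp
  next
    assume h: "cn vs k = {?u, ?v}"
    have km: "nx ?n k < ?n" using nx_lt[OF n0] .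
    have h': "{vs ! k, vs ! nx ?n k} = {?u, ?v}" using h by (simp add: cn_def nx_def)
    show "k = i - 1"
    proof (cases "vs ! k = ?u")
      case True thus ?thesis using rs_inj[OF vs k iN(3)] by simp
    next
      case False
      hence "vs ! k = ?v" "vs ! nx ?n k = ?u" using h' by (auto simp: doubleton_eq_iff)
      hence "k = i" "nx ?n k = i - 1" using rs_inj[OF vs k iN(4)] rs_inj[OF vs km iN(3)] by simp_all
      thus ?thesis using nx_lt'[OF iN(2)] by simp
    qed
  qed
  have c1: "cn ?s j = cn vs j" if "j < i - 1" for j
  proof -
    have "j + 1 < ?n + 1" "j + 1 < ?n" "j + 1 < i" "j < i" using that iN by linarith+
    thus ?thesis using cn_lt[of j ?s] cn_lt[of j vs] sd_lt[of j i vs] sd_lt[of "j+1" i vs] iN sd_len[of vs i] by simp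
  qed
  have c2: "cn ?s (i - 1) = {?u, ?w}"
  proof -
    have "i - 1 + 1 < ?n + 1" "i - 1 < i" "i - 1 + 1 = i" using iN i by linarith+
    thus ?thesis using cn_lt[of "i - 1" ?s] sd_lt[of "i - 1" i vs] sd_eq[OF iN(1)] sd_len[of vs i] iN by simp
  qed
  have c3: "cn ?s i = {?v, ?w}"
  proof -
    have "i + 1 < ?n + 1" "i < i + 1" "i + 1 \<le> ?n" using iN by linarith+
    thus ?thesis using cn_lt[of i ?s] sd_gt[of i "i+1" vs] sd_eq[OF iN(1)] sd_len[of vs i] by (simp add: insert_commute)
  qed
  have c4: "cn ?s j = cn vs (j - 1)" if "i < j" "j < ?n" for j
  proof -
    have "j + 1 < ?n + 1" "j - 1 + 1 < ?n" "i < j + 1" "j + 1 \<le> ?n" "j \<le> ?n" "j + 1 - 1 = j - 1 + 1" using that by linarith+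
    thus ?thesis using cn_lt[of j ?s] cn_lt[of "j - 1" vs] sd_gt[of i j vs] sd_gt[of i "j+1" vs] that sd_len[of vs i] by simp
  qed
  have c5: "cn ?s ?n = cn vs (?n - 1)"
  proof -
    have "0 < length ?s" "length ?s - 1 = ?n" "i < ?n" "0 < i" using sd_len[of vs i] iN i by simp_all
    thus ?thesis using cn_last[of ?s] cn_last[OF n0] sd_gt[of i ?n vs] sd_lt[of 0 i vs] iN by simp
  qed
  have S2: "(cn vs ` {..<?n} - {{?u, ?v}}) \<union> {{?u, ?w}, {?v, ?w}} = cn ?s ` {..<?n + 1}"
  proof
    show "(cn vs ` {..<?n} - {{?u, ?v}}) \<union> {{?u, ?w}, {?v, ?w}} \<subseteq> cn ?s ` {..<?n + 1}"
    proof
      fix c assume "c \<in> (cn vs ` {..<?n} - {{?u, ?v}}) \<union> {{?u, ?w}, {?v, ?w}}"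
      then consider k where "k < ?n" "c = cn vs k" "k \<noteq> i - 1" | "c = {?u, ?w}" | "c = {?v, ?w}"
        using cnU by auto
      thus "c \<in> cn ?s ` {..<?n + 1}"
      proof cases
        case 1
        consider "k < i - 1" | "i - 1 < k" "k < ?n - 1" | "k = ?n - 1" using 1 by linarith
        thus ?thesis
        proof cases
          case a: 1
          have "k < ?n + 1" using 1 by linarith
          thus ?thesis using c1[OF a] 1 by (metis image_eqI lessThan_iff)
        next
          case b: 2
          have "k + 1 < ?n + 1" "i < k + 1" "k + 1 < ?n" using b by linarith+
          thus ?thesis using c4[of "k+1"] 1 by (metis image_eqI lessThan_iff diff_add_inverse2)
        next
          case 3
          have "?n < ?n + 1" by simp
          thus ?thesis using c5 1 3 by (metis image_eqI lessThan_iff)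
        qed
      next
        case 2
        have "i - 1 < ?n + 1" using iN by linarith
        thus ?thesis using c2 2 by (metis image_eqI lessThan_iff)
      next
        case 3
        have "i < ?n + 1" using iN by linarith
        thus ?thesis using c3 3 by (metis image_eqI lessThan_iff)
      qed
    qed
    show "cn ?s ` {..<?n + 1} \<subseteq> (cn vs ` {..<?n} - {{?u, ?v}}) \<union> {{?u, ?w}, {?v, ?w}}"
    proof
      fix c assume "c \<in> cn ?s ` {..<?n + 1}"
      then obtain j where j: "j < ?n + 1" "c = cn ?s j" by auto
      consider "j < i - 1" | "j = i - 1" | "j = i" | "i < j" "j < ?n" | "j = ?n" using j by linarith
      thus "c \<in> (cn vs ` {..<?n} - {{?u, ?v}}) \<union> {{?u, ?w}, {?v, ?w}}"
      proof cases
        case 1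
        have "j < ?n" "j \<noteq> i - 1" using 1 iN by linarith+
        thus ?thesis using c1[OF 1] j cnU by auto
      next
        case 2 thus ?thesis using c2 j by simp
      next
        case 3 thus ?thesis using c3 j by simp
      next
        case 4
        have "j - 1 < ?n" "j - 1 \<noteq> i - 1" using 4 i by linarith+
        thus ?thesis using c4[OF 4] j cnU by auto
      next
        case 5
        have "?n - 1 < ?n" "?n - 1 \<noteq> i - 1" using iN n0 by linarith+
        thus ?thesis using c5 5 j cnU by auto
      qed
    qed
  qed
  show ?thesis
    unfolding subdiv_def Let_def fst_conv snd_conv fan_of_cn sd_len
    using S1 S2 by simp
qed

lemma sd_rs: assumes vs: "is_ray_seq vs" and i: "1 \<le> i" "i \<le> length vs - 3"
  shows "is_ray_seq (sd vs i)"
proof -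
  let ?n = "length vs"
  let ?u = "vs ! (i - 1)" let ?v = "vs ! i" let ?w = "vadd (vs ! (i - 1)) (vs ! i)"
  let ?s = "sd vs i"
  note R = rsD[OF vs]
  have n0: "0 < ?n" using R(1) by linarith
  have iN: "i \<le> ?n" "i + 1 < ?n" "i - 1 < ?n" "i < ?n" using i R(1) by linarith+
  have len: "length ?s = ?n + 1" by (rule sd_len)
  have duv: "det2 ?u ?v = -1" using rs_det[of vs "i - 1"] vs iN i by simp
  have s0: "?s ! 0 = (1, 0)" using sd_lt[of 0 i vs] i iN R(2) by simp
  have s3: "?s ! (?n + 1 - 3) = (0, -1)"
  proof -
    have "i < ?n - 2" "?n - 2 \<le> ?n" "?n + 1 - 3 = ?n - 2" "?n - 2 - 1 = ?n - 3" using i R(1) by linarith+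
    thus ?thesis using sd_gt[of i "?n - 2" vs] R(3) by simp
  qed
  have s2: "?s ! (?n + 1 - 2) = (-1, 0)"
  proof -
    have "i < ?n - 1" "?n - 1 \<le> ?n" "?n + 1 - 2 = ?n - 1" "?n - 1 - 1 = ?n - 2" using i R(1) by linarith+
    thus ?thesis using sd_gt[of i "?n - 1" vs] R(4) by simp
  qed
  have s1: "?s ! (?n + 1 - 1) = (0, 1)"
  proof -
    have "i < ?n" "?n \<le> ?n" "?n + 1 - 1 = ?n" using i R(1) by linarith+
    thus ?thesis using sd_gt[of i "?n" vs] R(5) by simp
  qed
  have det: "det2 (?s ! j) (?s ! ((j + 1) mod (?n + 1))) = -1" if j: "j < ?n + 1" for j
  proof -
    consider "j < i - 1" | "j = i - 1" | "j = i" | "i < j" "j < ?n" | "j = ?n" using j by linarith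
    thus ?thesis
    proof cases
      case 1
      have a: "(j + 1) mod (?n + 1) = j + 1" "j < i" "j + 1 < i" "j + 1 < ?n" using 1 iN by simp_all
      thus ?thesis using sd_lt[of j i vs] sd_lt[of "j+1" i vs] iN rs_det[OF vs a(4)] by simp
    next
      case 2
      have a: "(j + 1) mod (?n + 1) = i" "j < i" using 2 iN i by simp_all
      thus ?thesis using 2 sd_lt[of j i vs] sd_eq[OF iN(1)] iN duv
        by (cases "vs ! (i - 1)"; cases "vs ! i") (simp add: det2_def vadd_def algebra_simps)
    next
      case 3
      have a: "(j + 1) mod (?n + 1) = i + 1" "i < i + 1" "i + 1 \<le> ?n" using 3 iN by simp_all
      thus ?thesis using 3 sd_gt[of i "i+1" vs] sd_eq[OF iN(1)] duv
        by (cases "vs ! (i - 1)"; cases "vs ! i") (simp add: det2_def vadd_def algebra_simps)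
    next
      case 4
      have a: "(j + 1) mod (?n + 1) = j + 1" "i < j + 1" "j + 1 \<le> ?n" "j \<le> ?n" "j - 1 + 1 < ?n" "j + 1 - 1 = j - 1 + 1"
        using 4 by simp_all
      thus ?thesis using sd_gt[of i j vs] sd_gt[of i "j+1" vs] 4 rs_det[OF vs a(5)] by simp
    next
      case 5
      have a: "(j + 1) mod (?n + 1) = 0" "i < ?n" "0 < i" using 5 iN i by simp_all
      have "det2 (vs ! (?n - 1)) (vs ! 0) = -1" using R(6)[of "?n - 1"] n0 nx_last[OF n0] by (simp add: nx_def)
      thus ?thesis using a 5 sd_gt[of i ?n vs] sd_lt[of 0 i vs] by simp
    qed
  qed
  have sg: "fst (?s ! j) > 0 \<and> snd (?s ! j) < 0" if j: "0 < j" "j < ?n + 1 - 3" for j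
  proof -
    consider "j < i" | "j = i" | "i < j" by linarith
    thus ?thesis
    proof cases
      case 1 thus ?thesis using sd_lt[of j i vs] iN R(7)[of j] j i by simp
    next
      case 2
      have ux: "fst ?u > 0"
      proof (cases "i = 1")
        case True thus ?thesis using R(2) by simp
      next
        case False thus ?thesis using R(7)[of "i - 1"] i by simp
      qed
      have vy: "snd ?v < 0"
      proof (cases "i < ?n - 3")
        case True thus ?thesis using R(7)[of i] i by simp
      next
        case False hence "i = ?n - 3" using i by linarith
        thus ?thesis using R(3) by simp
      qed
      have "q4 ?u" "q4 ?v" using rs_q4[OF vs] i iN by simp_all
      hence "fst ?v \<ge> 0" "snd ?u \<le> 0" by (simp_all add: q4_def)
      thus ?thesis using 2 sd_eq[OF iN(1)] ux vy by (simp add: vadd_def)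
    next
      case 3
      have "j \<le> ?n" "0 < j - 1" "j - 1 < ?n - 3" using 3 j i by linarith+
      thus ?thesis using sd_gt[OF 3] R(7)[of "j - 1"] by simp
    qed
  qed
  show ?thesis unfolding is_ray_seq_def Let_def len
    using R(1) s0 s1 s2 s3 det sg by auto
qed

lemma smul_plus1a: "smul a u = vadd P v \<Longrightarrow> smul (a + 1) u = vadd P (vadd u v)"
  by (cases u; cases v; cases P) (simp add: smul_def vadd_def algebra_simps)
lemma smul_plus1b: "smul a v = vadd u N \<Longrightarrow> smul (a + 1) v = vadd (vadd u v) N"
  by (cases u; cases v; cases N) (simp add: smul_def vadd_def algebra_simps)

lemma sd_core: assumes vs: "is_ray_seq vs" and i: "1 \<le> i" "i \<le> length vs - 3"
  shows "core (sd vs i) = take (i - 1) (core vs) @ [core vs ! (i - 1) + 1, 1, core vs ! i + 1] @ drop (i + 1) (core vs)"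
proof (rule nth_equalityI)
  let ?n = "length vs"
  let ?u = "vs ! (i - 1)" let ?v = "vs ! i" let ?w = "vadd (vs ! (i - 1)) (vs ! i)"
  let ?s = "sd vs i"
  let ?c = "core vs"
  note R = rsD[OF vs]
  have n0: "0 < ?n" using R(1) by linarith
  have n1: "0 < ?n + 1" by simp
  have iN: "i \<le> ?n" "i + 1 < ?n" "i - 1 < ?n" "i < ?n" "i + 1 \<le> ?n - 2" using i R(1) by linarith+
  have cl: "length ?c = ?n - 2" by (rule core_len)
  show "length (core ?s) = length (take (i - 1) ?c @ [?c ! (i - 1) + 1, 1, ?c ! i + 1] @ drop (i + 1) ?c)"
    using iN i by (simp add: core_len sd_len cl)
  fix j assume "j < length (core ?s)"
  hence j: "j < ?n - 1" by (simp add: core_len sd_len)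
  have slen: "length ?s = ?n + 1" by (rule sd_len)
  have qs: "qv ?s j = qt (?s ! pv (?n + 1) j) (?s ! j) (?s ! nx (?n + 1) j)" by (simp add: qv_def slen)
  have qvs: "qv vs k = qt (vs ! pv ?n k) (vs ! k) (vs ! nx ?n k)" for k by (simp add: qv_def)
  have nxs: "nx (?n + 1) j = j + 1" using j nx_lt'[of j "?n + 1"] by simp
  have prev: "?s ! pv (?n + 1) j = vs ! pv ?n j" if "j < i" for j
  proof (cases "j = 0")
    case True
    have "pv (?n + 1) 0 = ?n" "pv ?n 0 = ?n - 1" using pv_0[OF n0] pv_0[OF n1] by simp_all
    thus ?thesis using True sd_gt[of i ?n vs] iN by simp
  next
    case False
    have "pv (?n + 1) j = j - 1" "pv ?n j = j - 1" "j - 1 < i" using pv_pos[of j ?n] pv_pos[of j "?n+1"] False that iN by simp_all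
    thus ?thesis using sd_lt[of "j - 1" i vs] iN by simp
  qed
  have lhs: "core ?s ! j = qv ?s j" using core_nth[of j ?s] j by (simp add: slen)
  have "0 < ?n - 2" using R(1) by linarith
  have ne_u: "?u \<noteq> (0,0)" "?v \<noteq> (0,0)" using rs_q4[OF vs, of "i - 1"] rs_q4[OF vs, of i] i q4_ne by simp_all
  consider "j < i - 1" | "j = i - 1" | "j = i" | "j = i + 1" | "i + 1 < j" by linarith
  thus "core ?s ! j = (take (i - 1) ?c @ [?c ! (i - 1) + 1, 1, ?c ! i + 1] @ drop (i + 1) ?c) ! j"
  proof cases
    case 1
    have a: "j < i" "j + 1 < i" "j + 1 < ?n" "j < ?n - 2" using 1 iN by linarith+
    have "qv ?s j = qv vs j"
      unfolding qs qvs nxs using prev[OF a(1)] sd_lt[OF a(1) iN(1)] sd_lt[OF a(2) iN(1)] nx_lt'[OF a(3)] by simp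
    moreover have "(take (i - 1) ?c @ [?c ! (i - 1) + 1, 1, ?c ! i + 1] @ drop (i + 1) ?c) ! j = ?c ! j"
      using 1 cl iN by (simp add: nth_append)
    ultimately show ?thesis using lhs core_nth[OF a(4)] by simp
  next
    case 2
    have a: "j < i" "i - 1 < ?n - 2" "nx ?n (i - 1) = i" using 2 iN i nx_lt'[of "i - 1" ?n] by simp_all
    have ex: "smul (qv vs (i - 1)) ?u = vadd (vs ! pv ?n (i - 1)) ?v"
      using rs_qv_ex[OF vs iN(3)] a(3) by simp
    have q: "qt (vs ! pv ?n (i - 1)) ?u ?w = qv vs (i - 1) + 1"
      by (rule qt_eq[OF ne_u(1) smul_plus1a[OF ex]])
    have "?s ! pv (?n + 1) j = vs ! pv ?n (i - 1)" "?s ! j = ?u" "?s ! (j + 1) = ?w"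
      using prev[OF a(1)] sd_lt[OF a(1) iN(1)] sd_eq[OF iN(1)] 2 i by simp_all
    hence "qv ?s j = qv vs (i - 1) + 1" unfolding qs nxs using q by simp
    moreover have "(take (i - 1) ?c @ [?c ! (i - 1) + 1, 1, ?c ! i + 1] @ drop (i + 1) ?c) ! j = ?c ! (i - 1) + 1"
      using 2 cl iN by (simp add: nth_append)
    ultimately show ?thesis using lhs core_nth[OF a(2)] by simp
  next
    case 3
    have a: "i - 1 < i" "pv (?n + 1) i = i - 1" "i < i + 1" "i + 1 \<le> ?n" using i iN pv_pos[of i "?n+1"] by simp_all
    have sg: "fst (?s ! i) > 0" using rsD(7)[OF sd_rs[OF vs i], of i] i iN by (simp add: sd_len)
    hence wne: "?w \<noteq> (0,0)" using sd_eq[OF iN(1)] by auto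
    have q: "qt ?u ?w ?v = 1"
      by (rule qt_eq[OF wne]) (simp add: smul_def vadd_def)
    have "?s ! pv (?n + 1) j = ?u" "?s ! j = ?w" "?s ! (j + 1) = ?v"
      using 3 a sd_lt[OF a(1) iN(1)] sd_eq[OF iN(1)] sd_gt[OF a(3) a(4)] by simp_all
    hence "qv ?s j = 1" unfolding qs nxs using q by simp
    moreover have "(take (i - 1) ?c @ [?c ! (i - 1) + 1, 1, ?c ! i + 1] @ drop (i + 1) ?c) ! j = 1"
    proof -
      have "\<not> i < i - 1" "i - (i - 1) = 1" using i by linarith+
      thus ?thesis using 3 cl iN i by (simp add: nth_append)
    qed
    ultimately show ?thesis using lhs by simp
  next
    case 4
    have a: "pv (?n + 1) (i + 1) = i" "i < i + 1" "i + 1 \<le> ?n" "i < i + 2" "i + 2 \<le> ?n" "i < ?n - 2"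
      "pv ?n i = i - 1" "nx ?n i = i + 1"
      using i iN pv_pos[of "i+1" "?n+1"] pv_pos[of i ?n] nx_lt'[of i ?n] by simp_all
    have ex: "smul (qv vs i) ?v = vadd ?u (vs ! (i + 1))"
      using rs_qv_ex[OF vs iN(4)] a by simp
    have q: "qt ?w ?v (vs ! (i + 1)) = qv vs i + 1"
      by (rule qt_eq[OF ne_u(2) smul_plus1b[OF ex]])
    have "?s ! pv (?n + 1) j = ?w" "?s ! j = ?v" "?s ! (j + 1) = vs ! (i + 1)"
      using 4 a sd_eq[OF iN(1)] sd_gt[OF a(2) a(3)] sd_gt[OF a(4) a(5)] by simp_all
    hence "qv ?s j = qv vs i + 1" unfolding qs nxs using q by simp
    moreover have "(take (i - 1) ?c @ [?c ! (i - 1) + 1, 1, ?c ! i + 1] @ drop (i + 1) ?c) ! j = ?c ! i + 1"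
    proof -
      have "\<not> i + 1 < i - 1" "i + 1 - (i - 1) = 2" using i by linarith+
      thus ?thesis using 4 cl iN i by (simp add: nth_append)
    qed
    ultimately show ?thesis using lhs core_nth[OF a(6)] by simp
  next
    case 5
    have a: "pv (?n + 1) j = j - 1" "i < j - 1" "j - 1 \<le> ?n" "i < j" "j \<le> ?n" "i < j + 1" "j + 1 \<le> ?n"
      "pv ?n (j - 1) = j - 2" "nx ?n (j - 1) = j" "j - 1 < ?n - 2" "j - 1 - 1 = j - 2" "j + 1 - 1 = j"
      using 5 j iN pv_pos[of j "?n+1"] pv_pos[of "j - 1" ?n] nx_lt'[of "j - 1" ?n] by simp_all
    have "qv ?s j = qv vs (j - 1)"
      unfolding qs nxs qvs using a sd_gt[OF a(2) a(3)] sd_gt[OF a(4) a(5)] sd_gt[OF a(6) a(7)] by simp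
    moreover have "(take (i - 1) ?c @ [?c ! (i - 1) + 1, 1, ?c ! i + 1] @ drop (i + 1) ?c) ! j = ?c ! (j - 1)"
    proof -
      have h: "\<not> j < i - 1" "min (?n - 2) (i - 1) = i - 1" "j - (i - 1) = Suc (Suc (Suc (j - i - 2)))"
        "i + 1 + (j - i - 2) = j - 1" "i + 1 \<le> length ?c" using i 5 iN cl by linarith+
      have "drop (i + 1) ?c ! (j - i - 2) = ?c ! (i + 1 + (j - i - 2))" using nth_drop[OF h(5), of "j - i - 2"] by simp
      also have "i + 1 + (j - i - 2) = j - 1" by (rule h(4))
      finally have "drop (i + 1) ?c ! (j - i - 2) = ?c ! (j - 1)" .
      thus ?thesis using h cl by (simp add: nth_append)
    qed
    ultimately show ?thesis using lhs core_nth[OF a(10)] by simp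
  qed
qed

lemma rho_iter: assumes vs: "is_ray_seq vs"
  shows "\<exists>ws. (rho ^^ k) (fan_of vs) = fan_of ws \<and> is_ray_seq ws \<and> length ws = length vs
              \<and> core ws = rotate k (core vs)"
proof (induction k)
  case 0 thus ?case using vs by auto
next
  case (Suc k)
  then obtain ws where ws: "(rho ^^ k) (fan_of vs) = fan_of ws" "is_ray_seq ws" "length ws = length vs"
    "core ws = rotate k (core vs)" by blast
  have "(rho ^^ Suc k) (fan_of vs) = fan_of (rot ws)" using ws(1) rho_fan[OF ws(2)] by simp
  moreover have "core (rot ws) = rotate (Suc k) (core vs)" using rot_core[OF ws(2)] ws(4) by simp
  ultimately show ?case using rot_rs[OF ws(2)] rot_len[of ws] ws(3) by metis
qed

lemma rho_period: assumes vs: "is_ray_seq vs"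
  shows "(rho ^^ (length vs - 2)) (fan_of vs) = fan_of vs"
proof -
  obtain ws where ws: "(rho ^^ (length vs - 2)) (fan_of vs) = fan_of ws" "is_ray_seq ws" "length ws = length vs"
    "core ws = rotate (length vs - 2) (core vs)" using rho_iter[OF vs] by blast
  have "core ws = core vs" using ws(4) by (simp add: core_len)
  hence "ws = vs" using core_unique[OF ws(2) vs ws(3)] by simp
  thus ?thesis using ws(1) by simp
qed

lemma rotate_dt: "k \<le> length c \<Longrightarrow> rotate k c = drop k c @ take k c"
proof (cases "k = length c")
  case True
  assume "k \<le> length c"
  thus ?thesis using True by simp
next
  case False
  assume "k \<le> length c"
  hence "k mod length c = k" using False by simp
  thus ?thesis by (simp add: rotate_drop_take)
qed

lemma list_id: fixes c :: "int list" assumes i: "1 \<le> i" "i + 1 \<le> length c"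
  shows "rotate (length c - 1 - i) (take (length c - 2) (rotate (i+1) c) @
     [rotate (i+1) c ! (length c - 2) + 1, 1, rotate (i+1) c ! (length c - 1) + 1] @ drop (length c) (rotate (i+1) c))
   = take (i - 1) c @ [c ! (i - 1) + 1, 1, c ! i + 1] @ drop (i + 1) c"
proof -
  let ?m = "length c"
  let ?A = "drop (i + 1) c" let ?B = "take (i + 1) c"
  have ct: "rotate (i+1) c = ?A @ ?B" using rotate_dt[OF i(2)] .
  have lA: "length ?A = ?m - 1 - i" using i by simp
  have lB: "length ?B = i + 1" using i by simp
  have t: "take (?m - 2) (?A @ ?B) = ?A @ take (i - 1) c"
  proof -
    have "?m - 2 - length ?A = i - 1" "length ?A \<le> ?m - 2" using lA i by linarith+
    hence "take (?m - 2) (?A @ ?B) = ?A @ take (i - 1) ?B" by simp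
    also have "take (i - 1) ?B = take (i - 1) c"
    proof -
      have "min (i + 1) (i - 1) = i - 1" by simp
      thus ?thesis by (simp add: take_take)
    qed
    finally show ?thesis .
  qed
  have x: "(?A @ ?B) ! (?m - 2) = c ! (i - 1)"
  proof -
    have "\<not> ?m - 2 < length ?A" "?m - 2 - length ?A = i - 1" "i - 1 < i + 1" using lA i by linarith+
    thus ?thesis by (simp add: nth_append)
  qed
  have y: "(?A @ ?B) ! (?m - 1) = c ! i"
  proof -
    have "\<not> ?m - 1 < length ?A" "?m - 1 - length ?A = i" "i < i + 1" using lA i by linarith+
    thus ?thesis by (simp add: nth_append)
  qed
  have d: "drop ?m (?A @ ?B) = []" using lA lB i by simp
  show ?thesis unfolding ct t x y d
    using rotate_append[of ?A "take (i - 1) c @ [c ! (i - 1) + 1, 1, c ! i + 1]"] lA by simp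
qed

lemma cFan_D: "S \<in> cFan \<Longrightarrow> \<exists>vs. S = fan_of vs \<and> is_ray_seq vs"
  by (auto simp: cFan_def)

lemma cFan_I: "is_ray_seq vs \<Longrightarrow> fan_of vs \<in> cFan"
  by (auto simp: cFan_def)

lemma rho_inj: assumes "S \<in> cFan" "T \<in> cFan" "rho S = rho T" shows "S = T"
proof -
  obtain vs where vs: "S = fan_of vs" "is_ray_seq vs" using cFan_D[OF assms(1)] by blast
  obtain ts where ts: "T = fan_of ts" "is_ray_seq ts" using cFan_D[OF assms(2)] by blast
  have "fan_of (rot vs) = fan_of (rot ts)" using assms(3) vs ts rho_fan by simp
  hence "rot vs = rot ts" using rs_set_unique[OF rot_rs[OF vs(2)] rot_rs[OF ts(2)]] fan_of_fst by metis
  hence l: "length vs = length ts" and "rotate1 (core vs) = rotate1 (core ts)"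
    using rot_len[of vs] rot_len[of ts] rot_core[OF vs(2)] rot_core[OF ts(2)] by metis+
  hence "core vs = core ts" using inj_rotate1 by (metis injD)
  thus ?thesis using core_unique[OF vs(2) ts(2) l] vs(1) ts(1) by simp
qed

theorem proposition4p5:
  assumes "S \<in> cFan"
  shows "rho S \<in> cFan
    \<and> quiddity (rho S) = tl (take (nrays S - 2) (quiddity S)) @ [hd (quiddity S), 0, 0]
    \<and> (rho ^^ (nrays S - 2)) S = S
    \<and> bij_betw rho cFan cFan
    \<and> (\<forall>i. 1 \<le> i \<and> i \<le> nrays S - 3 \<longrightarrow>
         subdiv (facet S i) S =
         (rho ^^ (nrays S - 3 - i))
           (subdiv (facet ((rho ^^ (i + 1)) S) (nrays S - 3)) ((rho ^^ (i + 1)) S)))"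
proof -
  obtain vs where vs: "S = fan_of vs" "is_ray_seq vs" using cFan_D[OF assms] by blast
  let ?n = "length vs"
  let ?c = "core vs"
  note R = rsD[OF vs(2)]
  have nr: "nrays S = ?n" using nrays_eq[OF vs(2)] vs(1) by simp
  have cl: "length ?c = ?n - 2" by (rule core_len)
  have "length ?c \<ge> 2" using cl R(1) by linarith
  hence cne: "?c \<noteq> []" by auto
  have A1: "rho S \<in> cFan" using vs rho_fan rot_rs cFan_I by simp
  have A2: "quiddity (rho S) = tl (take (nrays S - 2) (quiddity S)) @ [hd (quiddity S), 0, 0]"
  proof -
    have "quiddity (rho S) = rotate1 ?c @ [0, 0]"
      using vs rho_fan[OF vs(2)] quiddity_core[OF rot_rs[OF vs(2)]] rot_core[OF vs(2)] by simp
    moreover have "quiddity S = ?c @ [0, 0]" using vs quiddity_core by simp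
    ultimately show ?thesis using nr cl cne by (simp add: rotate1_hd_tl)
  qed
  have A3: "(rho ^^ (nrays S - 2)) S = S" using rho_period[OF vs(2)] vs(1) nr by simp
  have A4: "bij_betw rho cFan cFan"
    unfolding bij_betw_def
  proof
    show "inj_on rho cFan" using rho_inj by (meson inj_onI)
    show "rho ` cFan = cFan"
    proof
      show "rho ` cFan \<subseteq> cFan" using cFan_D rho_fan rot_rs cFan_I by force
      show "cFan \<subseteq> rho ` cFan"
      proof
        fix T assume "T \<in> cFan"
        then obtain ts where ts: "T = fan_of ts" "is_ray_seq ts" using cFan_D by blast
        obtain us where us: "(rho ^^ (length ts - 3)) (fan_of ts) = fan_of us" "is_ray_seq us"
          using rho_iter[OF ts(2)] by blast
        have "length ts - 2 = Suc (length ts - 3)" using rsD(1)[OF ts(2)] by linarith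
        hence "rho (fan_of us) = T" using rho_period[OF ts(2)] us(1) ts(1) by simp
        thus "T \<in> rho ` cFan" using cFan_I[OF us(2)] by blast
      qed
    qed
  qed
  have A5: "subdiv (facet S i) S = (rho ^^ (nrays S - 3 - i))
           (subdiv (facet ((rho ^^ (i + 1)) S) (nrays S - 3)) ((rho ^^ (i + 1)) S))"
    if i: "1 \<le> i" "i \<le> nrays S - 3" for i
  proof -
    have i': "i \<le> ?n - 3" "i + 1 < ?n" using i nr R(1) by linarith+
    have L: "subdiv (facet S i) S = fan_of (sd vs i)"
      using facet_eq[OF vs(2) i(1) i'(2)] sd_fan[OF vs(2) i(1) i'(1)] vs(1) by simp
    obtain ts where ts: "(rho ^^ (i + 1)) S = fan_of ts" "is_ray_seq ts" "length ts = ?n"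
      "core ts = rotate (i + 1) ?c" using rho_iter[OF vs(2), of "i+1"] vs(1) by blast
    have j: "1 \<le> ?n - 3" "?n - 3 \<le> length ts - 3" "?n - 3 + 1 < length ts" using R(1) ts(3) by linarith+
    have F: "subdiv (facet ((rho ^^ (i + 1)) S) (?n - 3)) ((rho ^^ (i + 1)) S) = fan_of (sd ts (?n - 3))"
      using facet_eq[OF ts(2) j(1) j(3)] sd_fan[OF ts(2) j(1) j(2)] ts(1) by simp
    have sdr: "is_ray_seq (sd ts (?n - 3))" using sd_rs[OF ts(2) j(1) j(2)] .
    obtain us where us: "(rho ^^ (?n - 3 - i)) (fan_of (sd ts (?n - 3))) = fan_of us" "is_ray_seq us"
      "length us = length (sd ts (?n - 3))" "core us = rotate (?n - 3 - i) (core (sd ts (?n - 3)))"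
      using rho_iter[OF sdr] by blast
    have "core us = core (sd vs i)"
    proof -
      have e: "?n - 3 - 1 = length ?c - 2" "?n - 3 = length ?c - 1" "?n - 3 + 1 = length ?c" "?n - 3 - i = length ?c - 1 - i"
        "i + 1 \<le> length ?c" using cl R(1) i' by linarith+
      have "core us = rotate (length ?c - 1 - i) (take (length ?c - 2) (rotate (i+1) ?c) @
         [rotate (i+1) ?c ! (length ?c - 2) + 1, 1, rotate (i+1) ?c ! (length ?c - 1) + 1] @ drop (length ?c) (rotate (i+1) ?c))"
        using us(4) sd_core[OF ts(2) j(1) j(2)] ts(4) e by simp
      also have "\<dots> = core (sd vs i)" using list_id[OF i(1) e(5)] sd_core[OF vs(2) i(1) i'(1)] by simp
      finally show ?thesis .
    qed
    hence "us = sd vs i" using core_unique[OF us(2) sd_rs[OF vs(2) i(1) i'(1)]] us(3) sd_len ts(3) by simp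
    thus ?thesis using L F us(1) nr by simp
  qed
  show ?thesis using A1 A2 A3 A4 A5 by blast
qed

end
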